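(* Let $H$ be a group, $U\subseteq H$ a subgroup, $E$ a field with an $H$-action, and $g_1,\dots,g_N$ elements of order $2$ in $N_H(U)/U$ which generate an infinite subgroup of $N_H(U)/U$. For each $j$ let $\langle U,g_j\rangle$ be the subgroup generated by $U$ and a lift of $g_j$. Then the natural map of $E$-semilinear representations $$r:E[H/U]\to\bigoplus_{j=1}^NE[H/\langle U,g_j\rangle],\qquad [hU]\mapsto\big([h\langle U,g_j\rangle]\big)_{j},$$ is injective.
   Context: $N_H(U)$ is the normalizer of $U$ in $H$. $E[S]$ for an $H$-set $S$ is the $E$-vector space with basis $S$ and $H$-action $h(e[s])=h(e)[hs]$. *)

theory Defs
  imports "HOL-Algebra.Algebra"
begin

definition field_action :: "('g, 'b) monoid_scheme \<Rightarrow> ('g \<Rightarrow> 'e::field \<Rightarrow> 'e) \<Rightarrow> bool" where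
  "field_action G act \<longleftrightarrow>
     (\<forall>h\<in>carrier G. bij (act h) \<and> act h 1 = 1 \<and>
        (\<forall>x y. act h (x + y) = act h x + act h y) \<and>
        (\<forall>x y. act h (x * y) = act h x * act h y)) \<and>
     act \<one>\<^bsub>G\<^esub> = id \<and>
     (\<forall>h\<in>carrier G. \<forall>k\<in>carrier G. act (h \<otimes>\<^bsub>G\<^esub> k) = act h \<circ> act k)"

text \<open>E[S]: the E-vector space with basis S, as finitely supported functions S \<rightarrow> E.\<close>
definition free_vs :: "'s set \<Rightarrow> ('s \<Rightarrow> 'e::field) set" where
  "free_vs S = {f. finite {s. f s \<noteq> 0} \<and> {s. f s \<noteq> 0} \<subseteq> S}"

text \<open>The E-linear map E[S] \<rightarrow> E[T] induced by a map of sets \<phi> : S \<rightarrow> T,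
  i.e. e[s] \<mapsto> e[\<phi> s].\<close>
definition lin_push :: "('s \<Rightarrow> 't) \<Rightarrow> ('s \<Rightarrow> 'e::field) \<Rightarrow> ('t \<Rightarrow> 'e)" where
  "lin_push \<phi> f = (\<lambda>t. \<Sum>s\<in>{s. f s \<noteq> 0 \<and> \<phi> s = t}. f s)"

text \<open>The natural map r : E[H/U] \<rightarrow> \<Oplus>_j E[H/K_j], hU \<mapsto> (hK_j)_j,
  for subgroups K_j \<supseteq> U; note hU K_j = hK_j.\<close>
definition coset_map :: "('g, 'b) monoid_scheme \<Rightarrow> (nat \<Rightarrow> 'g set) \<Rightarrow> ('g set \<Rightarrow> 'e::field) \<Rightarrow> nat \<Rightarrow> ('g set \<Rightarrow> 'e)" where
  "coset_map G K f = (\<lambda>j. lin_push (\<lambda>C. C <#>\<^bsub>G\<^esub> K j) f)"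

end

theory Submission
  imports Defs
begin

context group begin

lemma cancel1 [simp]: "x \<in> carrier G \<Longrightarrow> y \<in> carrier G \<Longrightarrow> inv x \<otimes> (x \<otimes> y) = y"
  by (simp add: m_assoc[symmetric])
lemma cancel2 [simp]: "x \<in> carrier G \<Longrightarrow> y \<in> carrier G \<Longrightarrow> x \<otimes> (inv x \<otimes> y) = y"
  by (simp add: m_assoc[symmetric])

lemma norm_carrier: "n \<in> normalizer G U \<Longrightarrow> n \<in> carrier G"
  unfolding normalizer_def stabilizer_def by auto

lemma norm_eq: "n \<in> normalizer G U \<Longrightarrow> U \<subseteq> carrier G \<Longrightarrow> n <# U #> inv n = U"
  unfolding normalizer_def stabilizer_def by auto

lemma norm_N1:
  assumes "n \<in> normalizer G U" "U \<subseteq> carrier G" "u \<in> U"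
  shows "n \<otimes> u \<otimes> inv n \<in> U"
proof -
  have "n \<otimes> u \<otimes> inv n \<in> n <# U #> inv n"
    unfolding l_coset_def r_coset_def using assms by auto
  thus ?thesis using norm_eq[OF assms(1,2)] by simp
qed

lemma norm_N2:
  assumes "n \<in> normalizer G U" "U \<subseteq> carrier G" "u \<in> U"
  shows "inv n \<otimes> u \<otimes> n \<in> U"
proof -
  have n: "n \<in> carrier G" using norm_carrier assms by auto
  have "u \<in> n <# U #> inv n" using norm_eq[OF assms(1,2)] assms(3) by simp
  then obtain u' where u': "u' \<in> U" "u = n \<otimes> u' \<otimes> inv n"
    unfolding l_coset_def r_coset_def by auto
  have "u' \<in> carrier G" using u' assms by auto
  hence "inv n \<otimes> u \<otimes> n = u'" using u' n by (simp add: m_assoc)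
  thus ?thesis using u' by simp
qed

lemma norm_rl:
  assumes "n \<in> normalizer G U" "subgroup U G"
  shows "U #> n = n <# U"
proof -
  have UG: "U \<subseteq> carrier G" using assms subgroup.subset by auto
  have n: "n \<in> carrier G" using norm_carrier assms by auto
  show ?thesis
  proof
    show "U #> n \<subseteq> n <# U"
    proof
      fix x assume "x \<in> U #> n"
      then obtain u where u: "u \<in> U" "x = u \<otimes> n" unfolding r_coset_def by auto
      have uc: "u \<in> carrier G" using u UG by auto
      have "x = n \<otimes> (inv n \<otimes> u \<otimes> n)" using u uc n by (simp add: m_assoc[symmetric])
      thus "x \<in> n <# U" using norm_N2[OF assms(1) UG u(1)] unfolding l_coset_def by auto
    qed
    show "n <# U \<subseteq> U #> n"
    proof
      fix x assume "x \<in> n <# U"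
      then obtain u where u: "u \<in> U" "x = n \<otimes> u" unfolding l_coset_def by auto
      have uc: "u \<in> carrier G" using u UG by auto
      have "x = (n \<otimes> u \<otimes> inv n) \<otimes> n" using u uc n by (simp add: m_assoc)
      thus "x \<in> U #> n" using norm_N1[OF assms(1) UG u(1)] unfolding r_coset_def by auto
    qed
  qed
qed

lemma lcos_eq_iff:
  assumes "subgroup U G" "y \<in> carrier G" "h \<in> carrier G"
  shows "(y <# U = h <# U) \<longleftrightarrow> inv h \<otimes> y \<in> U"
proof
  assume "y <# U = h <# U"
  hence "y \<in> h <# U" using lcos_self[OF assms(2,1)] by simp
  then obtain u where u: "u \<in> U" "y = h \<otimes> u" unfolding l_coset_def by auto
  have "u \<in> carrier G" using u assms subgroup.subset by blast
  thus "inv h \<otimes> y \<in> U" using u assms by (simp add: m_assoc[symmetric])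
next
  assume a: "inv h \<otimes> y \<in> U"
  have "y = h \<otimes> (inv h \<otimes> y)" using assms by (simp add: m_assoc[symmetric])
  hence "y \<in> h <# U" using a unfolding l_coset_def by auto
  thus "y <# U = h <# U" using l_repr_independence[OF _ assms(3,1)] by simp
qed

lemma K_struct:
  assumes sg: "subgroup U G" and ln: "l \<in> normalizer G U" and ll: "l \<otimes> l \<in> U"
  shows "generate G (insert l U) = U \<union> (l <# U)"
proof
  have UG: "U \<subseteq> carrier G" using sg subgroup.subset by auto
  have lc: "l \<in> carrier G" using norm_carrier ln by auto
  have uc: "\<And>u. u \<in> U \<Longrightarrow> u \<in> carrier G" using UG by auto
  have lU: "\<And>x. x \<in> l <# U \<longleftrightarrow> (\<exists>u\<in>U. x = l \<otimes> u)" unfolding l_coset_def by auto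
  let ?V = "U \<union> (l <# U)"
  have "subgroup ?V G"
  proof (rule subgroupI)
    show "?V \<subseteq> carrier G" using UG lc l_coset_subset_G by auto
    show "?V \<noteq> {}" using subgroup.one_closed[OF sg] by auto
  next
    fix a assume "a \<in> ?V"
    then consider "a \<in> U" | u where "u \<in> U" "a = l \<otimes> u" using lU by auto
    then show "inv a \<in> ?V"
    proof cases
      case 1 then show ?thesis using subgroup.m_inv_closed[OF sg] by auto
    next
      case 2
      have i1: "inv l \<otimes> inv u \<otimes> l \<in> U" using norm_N2[OF ln UG] 2 subgroup.m_inv_closed[OF sg] by auto
      have i2: "inv l \<otimes> inv l \<in> U" using subgroup.m_inv_closed[OF sg ll] lc by (simp add: inv_mult_group)
      have "inv a = l \<otimes> ((inv l \<otimes> inv u \<otimes> l) \<otimes> (inv l \<otimes> inv l))"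
        using 2 lc uc by (simp add: m_assoc inv_mult_group)
      moreover have "(inv l \<otimes> inv u \<otimes> l) \<otimes> (inv l \<otimes> inv l) \<in> U"
        using i1 i2 subgroup.m_closed[OF sg] by auto
      ultimately show ?thesis using lU by auto
    qed
  next
    fix a b assume a: "a \<in> ?V" and b: "b \<in> ?V"
    from a consider "a \<in> U" | u where "u \<in> U" "a = l \<otimes> u" using lU by auto
    then show "a \<otimes> b \<in> ?V"
    proof cases
      case 1
      from b consider "b \<in> U" | v where "v \<in> U" "b = l \<otimes> v" using lU by auto
      then show ?thesis
      proof cases
        case 1 then show ?thesis using `a \<in> U` subgroup.m_closed[OF sg] by auto
      next
        case 2
        have "a \<otimes> b = l \<otimes> ((inv l \<otimes> a \<otimes> l) \<otimes> v)" using 2 `a \<in> U` uc lc by (simp add: m_assoc)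
        moreover have "(inv l \<otimes> a \<otimes> l) \<otimes> v \<in> U"
          using norm_N2[OF ln UG `a \<in> U`] 2 subgroup.m_closed[OF sg] by auto
        ultimately show ?thesis using lU by auto
      qed
    next
      case 2
      from b consider "b \<in> U" | v where "v \<in> U" "b = l \<otimes> v" using lU by auto
      then show ?thesis
      proof cases
        case 1
        have "a \<otimes> b = l \<otimes> (u \<otimes> b)" using 1 2 uc lc by (simp add: m_assoc)
        then show ?thesis using lU 1 2 subgroup.m_closed[OF sg] by auto
      next
        case 3: 2
        have "a \<otimes> b = (l \<otimes> l) \<otimes> ((inv l \<otimes> u \<otimes> l) \<otimes> v)" using 2 3 uc lc by (simp add: m_assoc)
        moreover have "(l \<otimes> l) \<otimes> ((inv l \<otimes> u \<otimes> l) \<otimes> v) \<in> U"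
          using norm_N2[OF ln UG `u \<in> U`] 3 ll subgroup.m_closed[OF sg] by auto
        ultimately show ?thesis by auto
      qed
    qed
  qed
  moreover have "insert l U \<subseteq> ?V"
  proof -
    have "l = l \<otimes> \<one>" using lc by simp
    hence "l \<in> l <# U" using lU subgroup.one_closed[OF sg] by blast
    thus ?thesis by auto
  qed
  ultimately show "generate G (insert l U) \<subseteq> ?V" using generate_subgroup_incl by auto
next
  show "U \<union> (l <# U) \<subseteq> generate G (insert l U)"
  proof
    fix x assume "x \<in> U \<union> (l <# U)"
    then consider "x \<in> U" | u where "u \<in> U" "x = l \<otimes> u" unfolding l_coset_def by auto
    then show "x \<in> generate G (insert l U)"
    proof cases
      case 1 then show ?thesis by (auto intro: generate.incl)
    next
      case 2 then show ?thesis by (auto intro: generate.incl generate.eng)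
    qed
  qed
qed

lemma K_coset:
  assumes sg: "subgroup U G" and ln: "l \<in> normalizer G U" and ll: "l \<otimes> l \<in> U"
    and y: "y \<in> carrier G" and h: "h \<in> carrier G"
  shows "((y <# U) <#> generate G (insert l U) = (h <# U) <#> generate G (insert l U))
     \<longleftrightarrow> (y <# U = h <# U \<or> y <# U = (h \<otimes> l) <# U)"
proof -
  let ?K = "generate G (insert l U)"
  have UG: "U \<subseteq> carrier G" using sg subgroup.subset by auto
  have lc: "l \<in> carrier G" using norm_carrier ln by auto
  have Ksg: "subgroup ?K G" using generate_is_subgroup UG lc by auto
  have KG: "?K \<subseteq> carrier G" using Ksg subgroup.subset by auto
  have UK: "U <#> ?K = ?K"
  proof
    show "U <#> ?K \<subseteq> ?K" unfolding set_mult_def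
      using subgroup.m_closed[OF Ksg] generate.incl[of _ "insert l U" G] by auto
    show "?K \<subseteq> U <#> ?K"
    proof
      fix k assume k: "k \<in> ?K"
      hence "k = \<one> \<otimes> k" using KG by auto
      thus "k \<in> U <#> ?K" unfolding set_mult_def using k subgroup.one_closed[OF sg] by blast
    qed
  qed
  have e: "\<And>x. x \<in> carrier G \<Longrightarrow> (x <# U) <#> ?K = x <# ?K"
    using setmult_lcos_assoc UG KG UK by auto
  have "((y <# U) <#> ?K = (h <# U) <#> ?K) \<longleftrightarrow> inv h \<otimes> y \<in> ?K"
    using e y h lcos_eq_iff[OF Ksg y h] by simp
  also have "\<dots> \<longleftrightarrow> inv h \<otimes> y \<in> U \<or> (\<exists>u\<in>U. inv h \<otimes> y = l \<otimes> u)"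
    using K_struct[OF sg ln ll] unfolding l_coset_def by auto
  also have "(\<exists>u\<in>U. inv h \<otimes> y = l \<otimes> u) \<longleftrightarrow> inv (h \<otimes> l) \<otimes> y \<in> U"
  proof
    assume "\<exists>u\<in>U. inv h \<otimes> y = l \<otimes> u"
    then obtain u where u: "u \<in> U" "inv h \<otimes> y = l \<otimes> u" by auto
    have "inv (h \<otimes> l) \<otimes> y = inv l \<otimes> (inv h \<otimes> y)" using h lc y by (simp add: inv_mult_group m_assoc)
    also have "\<dots> = u" using u lc UG by auto
    finally show "inv (h \<otimes> l) \<otimes> y \<in> U" using u by simp
  next
    assume a: "inv (h \<otimes> l) \<otimes> y \<in> U"
    have "inv h \<otimes> y = l \<otimes> (inv (h \<otimes> l) \<otimes> y)" using h lc y by (simp add: inv_mult_group m_assoc)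
    thus "\<exists>u\<in>U. inv h \<otimes> y = l \<otimes> u" using a by blast
  qed
  finally show ?thesis using lcos_eq_iff[OF sg y h] lcos_eq_iff[OF sg y] h lc by auto
qed

lemma K_distinct:
  assumes sg: "subgroup U G" and lc: "l \<in> carrier G" and lU: "l \<notin> U" and h: "h \<in> carrier G"
  shows "h <# U \<noteq> (h \<otimes> l) <# U"
proof
  assume "h <# U = (h \<otimes> l) <# U"
  hence "inv (h \<otimes> l) \<otimes> h \<in> U" using lcos_eq_iff[OF sg h] h lc by auto
  moreover have "inv (h \<otimes> l) \<otimes> h = inv l" using h lc by (simp add: inv_mult_group m_assoc)
  ultimately have "inv (inv l) \<in> U" using subgroup.m_inv_closed[OF sg] by metis
  thus False using lU lc by simp
qed

lemma push_two:
  fixes f :: "'a set \<Rightarrow> 'e::field"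
  assumes sg: "subgroup U G" and ln: "l \<in> normalizer G U" and ll: "l \<otimes> l \<in> U"
    and lU: "l \<notin> U" and h: "h \<in> carrier G" and supp: "{s. f s \<noteq> 0} \<subseteq> lcosets U"
  shows "lin_push (\<lambda>C. C <#> generate G (insert l U)) f ((h <# U) <#> generate G (insert l U))
     = f (h <# U) + f ((h \<otimes> l) <# U)"
proof -
  let ?K = "generate G (insert l U)"
  let ?t = "(h <# U) <#> ?K"
  let ?A = "{s. f s \<noteq> 0 \<and> s <#> ?K = ?t}"
  let ?B = "{h <# U, (h \<otimes> l) <# U}"
  have lc: "l \<in> carrier G" using norm_carrier ln by auto
  have hl: "h \<otimes> l \<in> carrier G" using h lc by auto
  have AB: "?A \<subseteq> ?B"
  proof
    fix s assume s: "s \<in> ?A"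
    then obtain y where y: "y \<in> carrier G" "s = y <# U" using supp unfolding LCOSETS_def by auto
    have "s <#> ?K = ?t" using s by simp
    hence "y <# U = h <# U \<or> y <# U = (h \<otimes> l) <# U" using y(2) K_coset[OF sg ln ll y(1) h] by simp
    thus "s \<in> ?B" using y(2) by blast
  qed
  have Bt1: "(h <# U) <#> ?K = ?t" by simp
  have Bt2: "((h \<otimes> l) <# U) <#> ?K = ?t" using K_coset[OF sg ln ll hl h] by simp
  have Bt: "\<And>s. s \<in> ?B \<Longrightarrow> s <#> ?K = ?t" using Bt1 Bt2 by blast
  have "lin_push (\<lambda>C. C <#> ?K) f ?t = sum f ?A" unfolding lin_push_def by simp
  also have "\<dots> = sum f ?B"
  proof (rule sum.mono_neutral_left)
    show "finite ?B" by simp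
    show "?A \<subseteq> ?B" by (rule AB)
    show "\<forall>i\<in>?B - ?A. f i = 0" using Bt by blast
  qed
  also have "\<dots> = f (h <# U) + f ((h \<otimes> l) <# U)"
    using K_distinct[OF sg lc lU h] by simp
  finally show ?thesis .
qed

end

lemma (in group) main_aux:
  fixes U :: "'a set"
    and N :: nat
    and g :: "nat \<Rightarrow> 'a set"
    and lift :: "nat \<Rightarrow> 'a"
    and Q
  defines "Q \<equiv> (G\<lparr>carrier := normalizer G U\<rparr>) Mod U"
  assumes sg: "subgroup U G"
    and gQ: "\<And>j. j < N \<Longrightarrow> g j \<in> carrier Q"
    and ordg: "\<And>j. j < N \<Longrightarrow> group.ord Q (g j) = 2"
    and inf: "infinite (generate Q (g ` {..<N}))"
    and lg: "\<And>j. j < N \<Longrightarrow> lift j \<in> g j"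
  shows "inj_on
           (\<lambda>f. \<lambda>j\<in>{..<N}. coset_map G (\<lambda>i. generate G (insert (lift i) U)) f j)
           (free_vs (lcosets U) :: ('a set \<Rightarrow> 'e::field) set)"
proof (rule inj_onI)
  have grp: "group G" by (rule is_group)
  define NS where "NS = G\<lparr>carrier := normalizer G U\<rparr>"
  have UG: "U \<subseteq> carrier G" using sg subgroup.subset by auto
  have nsub: "subgroup (normalizer G U) G" using normalizer_imp_subgroup[OF UG] .
  have nsg: "group NS" unfolding NS_def using subgroup_imp_group[OF nsub] .
  have nrm: "normal U NS" unfolding NS_def using subgroup_in_normalizer[OF sg] .
  have Qg: "group Q" unfolding Q_def NS_def[symmetric] using normal.factorgroup_is_group[OF nrm] .
  have Unorm: "U \<subseteq> normalizer G U" using normal.axioms(1)[OF nrm] subgroup.subset unfolding NS_def by force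
  have rc: "\<And>x. r_coset NS U x = U #> x" unfolding NS_def r_coset_def by simp
  have sm: "\<And>A B. set_mult NS A B = A <#> B" unfolding NS_def set_mult_def by simp
  have carQ: "\<And>c. c \<in> carrier Q \<Longrightarrow> \<exists>n\<in>normalizer G U. c = U #> n"
    unfolding Q_def NS_def[symmetric] carrier_FactGroup using rc by (auto simp: NS_def)
  have oneQ: "\<one>\<^bsub>Q\<^esub> = U" unfolding Q_def by simp
  have multQ: "\<And>n m. n \<in> normalizer G U \<Longrightarrow> m \<in> normalizer G U \<Longrightarrow>
      (U #> n) \<otimes>\<^bsub>Q\<^esub> (U #> m) = U #> (n \<otimes> m)"
  proof -
    fix n m assume n: "n \<in> normalizer G U" and m: "m \<in> normalizer G U"
    have "set_mult NS (r_coset NS U n) (r_coset NS U m) = r_coset NS U (n \<otimes>\<^bsub>NS\<^esub> m)"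
      using normal.rcos_sum[OF nrm] n m unfolding NS_def by simp
    thus "(U #> n) \<otimes>\<^bsub>Q\<^esub> (U #> m) = U #> (n \<otimes> m)"
      unfolding Q_def NS_def[symmetric] using rc sm by (simp add: NS_def)
  qed
  have inQ: "\<And>n. n \<in> normalizer G U \<Longrightarrow> U #> n \<in> carrier Q"
    unfolding Q_def NS_def[symmetric] carrier_FactGroup using rc by (auto simp: NS_def)
  have lcos_c: "\<And>x n. x \<in> carrier G \<Longrightarrow> n \<in> normalizer G U \<Longrightarrow> x <# (U #> n) = (x \<otimes> n) <# U"
    using norm_rl[OF _ sg] lcos_m_assoc[OF UG] norm_carrier by auto
  have lift_facts: "lift j \<in> normalizer G U \<and> g j = U #> lift j \<and> lift j \<otimes> lift j \<in> U \<and> lift j \<notin> U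
      \<and> inv\<^bsub>Q\<^esub> (g j) = g j" if j: "j < N" for j
  proof -
    obtain n where n: "n \<in> normalizer G U" "g j = U #> n" using carQ gQ j by blast
    have nc: "n \<in> carrier G" using norm_carrier n by auto
    have lin: "lift j \<in> U #> n" using lg j n by auto
    then obtain u where u: "u \<in> U" "lift j = u \<otimes> n" unfolding r_coset_def by auto
    have ln: "lift j \<in> normalizer G U" using u n Unorm subgroup.m_closed[OF nsub] by auto
    have gl: "g j = U #> lift j" using n repr_independence[OF lin nc sg] by simp
    have gc: "g j \<in> carrier Q" using gQ j by auto
    have "g j [^]\<^bsub>Q\<^esub> (2::nat) = \<one>\<^bsub>Q\<^esub>" using group.pow_eq_id[OF Qg gc] ordg j by simp
    hence gg: "g j \<otimes>\<^bsub>Q\<^esub> g j = \<one>\<^bsub>Q\<^esub>"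
      using monoid.l_one[OF group.is_monoid[OF Qg] gc] by (simp add: numeral_2_eq_2)
    hence "U #> (lift j \<otimes> lift j) = U" using multQ[OF ln ln] gl oneQ by simp
    moreover have "lift j \<otimes> lift j \<in> U #> (lift j \<otimes> lift j)"
      using rcos_self[OF _ sg] ln norm_carrier by auto
    ultimately have ll: "lift j \<otimes> lift j \<in> U" by simp
    have "g j \<noteq> \<one>\<^bsub>Q\<^esub>" using group.ord_eq_1[OF Qg gc] ordg j by simp
    hence lU: "lift j \<notin> U" using gl oneQ subgroup.rcos_const[OF sg grp] by auto
    have "inv\<^bsub>Q\<^esub> (g j) = g j" using group.inv_equality[OF Qg gg gc gc] .
    thus ?thesis using ln gl ll lU by blast
  qed
  fix f1 f2 :: "'a set \<Rightarrow> 'e"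
  assume f1: "f1 \<in> free_vs (lcosets U)" and f2: "f2 \<in> free_vs (lcosets U)"
    and eq: "(\<lambda>j\<in>{..<N}. coset_map G (\<lambda>i. generate G (insert (lift i) U)) f1 j)
           = (\<lambda>j\<in>{..<N}. coset_map G (\<lambda>i. generate G (insert (lift i) U)) f2 j)"
  have s1: "{s. f1 s \<noteq> 0} \<subseteq> lcosets U" and s2: "{s. f2 s \<noteq> 0} \<subseteq> lcosets U"
    and fin1: "finite {s. f1 s \<noteq> 0}" and fin2: "finite {s. f2 s \<noteq> 0}"
    using f1 f2 unfolding free_vs_def by auto
  define d where "d s = f1 s - f2 s" for s
  have rel: "d (x <# U) + d ((x \<otimes> lift j) <# U) = 0" if j: "j < N" and x: "x \<in> carrier G" for j x
  proof -
    obtain ln ll lU where lf: "lift j \<in> normalizer G U" "lift j \<otimes> lift j \<in> U" "lift j \<notin> U"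
      using lift_facts[OF j] by blast
    have "coset_map G (\<lambda>i. generate G (insert (lift i) U)) f1 j
        = coset_map G (\<lambda>i. generate G (insert (lift i) U)) f2 j"
      using fun_cong[OF eq, of j] j by simp
    hence "lin_push (\<lambda>C. C <#> generate G (insert (lift j) U)) f1 ((x <# U) <#> generate G (insert (lift j) U))
        = lin_push (\<lambda>C. C <#> generate G (insert (lift j) U)) f2 ((x <# U) <#> generate G (insert (lift j) U))"
      unfolding coset_map_def by simp
    hence "f1 (x <# U) + f1 ((x \<otimes> lift j) <# U) = f2 (x <# U) + f2 ((x \<otimes> lift j) <# U)"
      using push_two[OF sg lf x s1] push_two[OF sg lf x s2] by simp
    thus ?thesis unfolding d_def by (simp add: algebra_simps)
  qed
  have inv_ind: "c \<in> carrier Q \<and> (\<forall>x\<in>carrier G. (d (x <# c) = 0 \<longleftrightarrow> d (x <# U) = 0))"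
    if c: "c \<in> generate Q (g ` {..<N})" for c
    using c
  proof (induction rule: generate.induct)
    case one
    show ?case using monoid.one_closed[OF group.is_monoid[OF Qg]] oneQ by simp
  next
    case (incl h)
    then obtain j where j: "j < N" "h = g j" by auto
    have lf: "lift j \<in> normalizer G U" "g j = U #> lift j" using lift_facts[OF j(1)] by auto
    show ?case
    proof (intro conjI ballI)
      show "h \<in> carrier Q" using j gQ by auto
      fix x assume x: "x \<in> carrier G"
      have "x <# h = (x \<otimes> lift j) <# U" using lcos_c[OF x lf(1)] lf j by simp
      thus "(d (x <# h) = 0) = (d (x <# U) = 0)" using rel[OF j(1) x] by (auto simp: add_eq_0_iff)
    qed
  next
    case (inv h)
    then obtain j where j: "j < N" "h = g j" by auto
    have lf: "lift j \<in> normalizer G U" "g j = U #> lift j" "inv\<^bsub>Q\<^esub> (g j) = g j"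
      using lift_facts[OF j(1)] by auto
    show ?case
    proof (intro conjI ballI)
      show "inv\<^bsub>Q\<^esub> h \<in> carrier Q" using gQ[OF j(1)] lf(3) j(2) by simp
      fix x assume x: "x \<in> carrier G"
      have "x <# inv\<^bsub>Q\<^esub> h = (x \<otimes> lift j) <# U" using lcos_c[OF x lf(1)] lf j by simp
      thus "(d (x <# inv\<^bsub>Q\<^esub> h) = 0) = (d (x <# U) = 0)" using rel[OF j(1) x] by (auto simp: add_eq_0_iff)
    qed
  next
    case (eng h1 h2)
    obtain n1 where n1: "n1 \<in> normalizer G U" "h1 = U #> n1" using carQ eng by blast
    obtain n2 where n2: "n2 \<in> normalizer G U" "h2 = U #> n2" using carQ eng by blast
    have n12: "n1 \<otimes> n2 \<in> normalizer G U" using n1 n2 subgroup.m_closed[OF nsub] by auto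
    have e: "h1 \<otimes>\<^bsub>Q\<^esub> h2 = U #> (n1 \<otimes> n2)" using multQ n1 n2 by simp
    show ?case
    proof (intro conjI ballI)
      show "h1 \<otimes>\<^bsub>Q\<^esub> h2 \<in> carrier Q" using e inQ n12 by simp
      fix x assume x: "x \<in> carrier G"
      have n1c: "n1 \<in> carrier G" and n2c: "n2 \<in> carrier G" using n1 n2 norm_carrier by auto
      have xn1: "x \<otimes> n1 \<in> carrier G" using x n1c by simp
      have "x <# (h1 \<otimes>\<^bsub>Q\<^esub> h2) = ((x \<otimes> n1) \<otimes> n2) <# U"
        using lcos_c[OF x n12] e x n1c n2c by (simp add: m_assoc)
      also have "\<dots> = (x \<otimes> n1) <# h2" using lcos_c[OF xn1 n2(1)] n2 by simp
      finally have a: "x <# (h1 \<otimes>\<^bsub>Q\<^esub> h2) = (x \<otimes> n1) <# h2" .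
      have b: "x <# h1 = (x \<otimes> n1) <# U" using lcos_c[OF x n1(1)] n1 by simp
      show "(d (x <# (h1 \<otimes>\<^bsub>Q\<^esub> h2)) = 0) = (d (x <# U) = 0)"
        using a b eng.IH xn1 x by metis
    qed
  qed
  show "f1 = f2"
  proof (rule ccontr)
    assume "f1 \<noteq> f2"
    then obtain s where s: "d s \<noteq> 0" unfolding d_def by (auto simp: fun_eq_iff)
    hence "f1 s \<noteq> 0 \<or> f2 s \<noteq> 0" unfolding d_def by auto
    hence "s \<in> lcosets U" using s1 s2 by auto
    then obtain x0 where x0: "x0 \<in> carrier G" "s = x0 <# U" unfolding LCOSETS_def by auto
    let ?Gen = "generate Q (g ` {..<N})"
    let ?S = "{s. f1 s \<noteq> 0} \<union> {s. f2 s \<noteq> 0}"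
    have img: "(\<lambda>c. x0 <# c) ` ?Gen \<subseteq> ?S"
    proof
      fix t assume "t \<in> (\<lambda>c. x0 <# c) ` ?Gen"
      then obtain c where c: "c \<in> ?Gen" "t = x0 <# c" by auto
      have "d t \<noteq> 0" using inv_ind[OF c(1)] x0 s c(2) by auto
      thus "t \<in> ?S" unfolding d_def by auto
    qed
    have injc: "inj_on (\<lambda>c. x0 <# c) ?Gen"
    proof (rule inj_onI)
      fix c c' assume c: "c \<in> ?Gen" and c': "c' \<in> ?Gen" and e: "x0 <# c = x0 <# c'"
      obtain n where n: "n \<in> normalizer G U" "c = U #> n" using carQ inv_ind[OF c] by blast
      obtain n' where n': "n' \<in> normalizer G U" "c' = U #> n'" using carQ inv_ind[OF c'] by blast
      have cs: "c \<subseteq> carrier G" using n r_coset_subset_G[OF UG] norm_carrier by auto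
      have cs': "c' \<subseteq> carrier G" using n' r_coset_subset_G[OF UG] norm_carrier by auto
      have "inv x0 <# (x0 <# c) = inv x0 <# (x0 <# c')" using e by simp
      thus "c = c'" using lcos_m_assoc[OF cs] lcos_m_assoc[OF cs'] lcos_mult_one[OF cs]
          lcos_mult_one[OF cs'] x0 by simp
    qed
    have "finite ?S" using fin1 fin2 by simp
    hence "finite ((\<lambda>c. x0 <# c) ` ?Gen)" using img finite_subset by blast
    hence "finite ?Gen" using finite_imageD injc by blast
    thus False using inf by simp
  qed
qed


theorem mainTheorem19:
  fixes H :: "('g, 'b) monoid_scheme"
    and U :: "'g set"
    and act :: "'g \<Rightarrow> 'e::field \<Rightarrow> 'e"
    and N :: nat
    and g :: "nat \<Rightarrow> 'g set"
    and lift :: "nat \<Rightarrow> 'g"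
  defines "Q \<equiv> (H\<lparr>carrier := normalizer H U\<rparr>) Mod U"
  assumes "group H"
    and "subgroup U H"
    and "field_action H act"
    and "\<And>j. j < N \<Longrightarrow> g j \<in> carrier Q"
    and "\<And>j. j < N \<Longrightarrow> group.ord Q (g j) = 2"
    and "infinite (generate Q (g ` {..<N}))"
    and "\<And>j. j < N \<Longrightarrow> lift j \<in> g j"
  shows "inj_on
           (\<lambda>f. \<lambda>j\<in>{..<N}. coset_map H (\<lambda>i. generate H (insert (lift i) U)) f j)
           (free_vs (lcosets\<^bsub>H\<^esub> U) :: ('g set \<Rightarrow> 'e) set)"
  apply (rule group.main_aux[OF assms(2,3)])
  using assms(5-8) unfolding Q_def by auto

end
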